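(* Let $H$ be a separable infinite-dimensional complex Hilbert space and let $U\in\mathcal{L}(H)$ be universal. Then: (i) There is $r>0$ such that the open disc $B(0,r)=\{z\in\mathbb{C}:|z|<r\}$ satisfies \[ B(0,r)\subset \sigma_p(U;H)\cap\sigma_e^+(U;H)\subset \sigma_e(U;H)\subset\sigma(U;H), \] and moreover every $\lambda\in B(0,r)$ is an eigenvalue of $U$ of infinite multiplicity. In particular, $0$ is an interior point of each of the sets $\sigma_e^+(U;H)$, $\sigma_e(U;H)$, $\sigma_p(U;H)$ and $\sigma(U;H)$. (ii) There is $r>0$ and a (vector-valued) holomorphic map $z\mapsto y_z$, $B(0,r)\to H$, such that $Uy_z=zy_z$ for all $z\in B(0,r)$.
   Context: $\mathcal{L}(H)$ denotes the bounded linear operators on $H$. Operators $T_1\in\mathcal{L}(H_1)$, $T_2\in\mathcal{L}(H_2)$ are similar if there is a linear isomorphism $J:H_1\to H_2$ with $T_1=J^{-1}T_2J$. An operator $U\in\mathcal{L}(H)$ is universal if for every $T\in\mathcal{L}(H)$ there exist a closed subspace $M\subset H$ with $U(M)\subset M$ and a constant $c\neq0$ such that $U|_M:M\to M$ and $cT:H\to H$ are similar. $\sigma(S;H)$ is the spectrum, $\sigma_p(S;H)$ the point spectrum, $\sigma_e(S;H)=\{\lambda: S-\lambda I \text{ is not Fredholm}\}$ the essential spectrum, and $\sigma_e^+(S;H)=\{\lambda: S-\lambda I\notin\Phi_+(H)\}$, where $\Phi_+(H)$ is the set of operators with finite-dimensional kernel and closed range. *)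

theory Defs
  imports "HOL-Analysis.Analysis"
begin

class complex_vector = real_vector +
  fixes scaleC :: "complex \<Rightarrow> 'a \<Rightarrow> 'a" (infixr \<open>*\<^sub>C\<close> 75)
  assumes scaleC_add_right: "a *\<^sub>C (x + y) = a *\<^sub>C x + a *\<^sub>C y"
    and scaleC_add_left: "(a + b) *\<^sub>C x = a *\<^sub>C x + b *\<^sub>C x"
    and scaleC_scaleC: "a *\<^sub>C (b *\<^sub>C x) = (a * b) *\<^sub>C x"
    and scaleC_one: "1 *\<^sub>C x = x"
    and scaleR_scaleC: "scaleR r x = (complex_of_real r) *\<^sub>C x"

class complex_inner = complex_vector + real_normed_vector +
  fixes cinner :: "'a \<Rightarrow> 'a \<Rightarrow> complex"
  assumes cinner_commute: "cinner x y = cnj (cinner y x)"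
    and cinner_add_left: "cinner (x + y) z = cinner x z + cinner y z"
    and cinner_scaleC_left: "cinner (c *\<^sub>C x) y = cnj c * cinner x y"
    and cinner_nonneg: "0 \<le> Re (cinner x x)"
    and cinner_eq_zero_iff: "cinner x x = 0 \<longleftrightarrow> x = 0"
    and norm_eq_sqrt_cinner: "norm x = sqrt (Re (cinner x x))"

class chilbert = complex_inner + complete_space

definition cspan :: "'a::complex_vector set \<Rightarrow> 'a set" where
  "cspan B = module.span scaleC B"

definition cdependent :: "'a::complex_vector set \<Rightarrow> bool" where
  "cdependent B = module.dependent scaleC B"

definition cfinite_dim :: "'a::complex_vector set \<Rightarrow> bool" where
  "cfinite_dim S \<longleftrightarrow> (\<exists>B. finite B \<and> S \<subseteq> cspan B)"

definition infinite_dimensional_space :: "'a::complex_vector itself \<Rightarrow> bool" where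
  "infinite_dimensional_space _ \<longleftrightarrow> (\<exists>S::'a set. infinite S \<and> \<not> cdependent S)"

definition separable_space_type :: "'a::topological_space itself \<Rightarrow> bool" where
  "separable_space_type _ \<longleftrightarrow> (\<exists>D::'a set. countable D \<and> closure D = UNIV)"

definition clinear :: "('a::complex_vector \<Rightarrow> 'b::complex_vector) \<Rightarrow> bool" where
  "clinear f \<longleftrightarrow> (\<forall>x y. f (x + y) = f x + f y) \<and> (\<forall>c x. f (c *\<^sub>C x) = c *\<^sub>C f x)"

definition bounded_clinear :: "('a::complex_inner \<Rightarrow> 'b::complex_inner) \<Rightarrow> bool" where
  "bounded_clinear f \<longleftrightarrow> clinear f \<and> (\<exists>K. \<forall>x. norm (f x) \<le> norm x * K)"

definition closed_csubspace :: "'a::complex_inner set \<Rightarrow> bool" where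
  "closed_csubspace M \<longleftrightarrow> closed M \<and> 0 \<in> M \<and> (\<forall>x\<in>M. \<forall>y\<in>M. x + y \<in> M)
     \<and> (\<forall>c. \<forall>x\<in>M. c *\<^sub>C x \<in> M)"

definition similar_restr :: "'a::complex_inner set \<Rightarrow> ('a \<Rightarrow> 'a) \<Rightarrow> ('a \<Rightarrow> 'a) \<Rightarrow> bool" where
  "similar_restr M V S \<longleftrightarrow>
     (\<exists>J Ji.
        (\<forall>x\<in>M. \<forall>y\<in>M. J (x + y) = J x + J y) \<and> (\<forall>c. \<forall>x\<in>M. J (c *\<^sub>C x) = c *\<^sub>C J x) \<and>
        (\<exists>K. \<forall>x\<in>M. norm (J x) \<le> norm x * K) \<and>
        bounded_clinear Ji \<and> (\<forall>x. Ji x \<in> M \<and> J (Ji x) = x) \<and> (\<forall>y\<in>M. Ji (J y) = y) \<and>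
        (\<forall>y\<in>M. V y = Ji (S (J y))))"

definition universal_op :: "('a::complex_inner \<Rightarrow> 'a) \<Rightarrow> bool" where
  "universal_op U \<longleftrightarrow>
     (\<forall>T. bounded_clinear T \<longrightarrow>
        (\<exists>M c. closed_csubspace M \<and> U ` M \<subseteq> M \<and> c \<noteq> 0 \<and>
               similar_restr M U (\<lambda>x. c *\<^sub>C T x)))"

definition cinvertible :: "('a::complex_inner \<Rightarrow> 'a) \<Rightarrow> bool" where
  "cinvertible A \<longleftrightarrow> (\<exists>R. bounded_clinear R \<and> (\<forall>x. R (A x) = x) \<and> (\<forall>x. A (R x) = x))"

definition shift_op :: "('a::complex_vector \<Rightarrow> 'a) \<Rightarrow> complex \<Rightarrow> 'a \<Rightarrow> 'a" where
  "shift_op S l = (\<lambda>x. S x - l *\<^sub>C x)"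

definition op_spectrum :: "('a::complex_inner \<Rightarrow> 'a) \<Rightarrow> complex set" where
  "op_spectrum S = {l. \<not> cinvertible (shift_op S l)}"

definition point_spectrum :: "('a::complex_inner \<Rightarrow> 'a) \<Rightarrow> complex set" where
  "point_spectrum S = {l. \<exists>x. x \<noteq> 0 \<and> S x = l *\<^sub>C x}"

definition upper_semi_fredholm :: "('a::complex_inner \<Rightarrow> 'a) \<Rightarrow> bool" where
  "upper_semi_fredholm A \<longleftrightarrow> cfinite_dim {x. A x = 0} \<and> closed (range A)"

definition fredholm :: "('a::complex_inner \<Rightarrow> 'a) \<Rightarrow> bool" where
  "fredholm A \<longleftrightarrow> cfinite_dim {x. A x = 0} \<and> closed (range A) \<and>
     (\<exists>B. finite B \<and> (\<forall>x. \<exists>y z. x = A y + z \<and> z \<in> cspan B))"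

definition essential_spectrum :: "('a::complex_inner \<Rightarrow> 'a) \<Rightarrow> complex set" where
  "essential_spectrum S = {l. \<not> fredholm (shift_op S l)}"

definition upper_essential_spectrum :: "('a::complex_inner \<Rightarrow> 'a) \<Rightarrow> complex set" where
  "upper_essential_spectrum S = {l. \<not> upper_semi_fredholm (shift_op S l)}"

definition vholomorphic_on :: "(complex \<Rightarrow> 'a::complex_inner) \<Rightarrow> complex set \<Rightarrow> bool" where
  "vholomorphic_on f S \<longleftrightarrow>
     (\<forall>z\<in>S. \<exists>d. ((\<lambda>w. inverse (w - z) *\<^sub>C (f w - f z)) \<longlongrightarrow> d) (at z within S))"

end

theory Submission
  imports Defs
begin


interpretation cvs: vector_space "scaleC :: complex \<Rightarrow> 'a::complex_vector \<Rightarrow> 'a"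
  by unfold_locales (auto simp: scaleC_add_right scaleC_add_left scaleC_scaleC scaleC_one)

lemma cspan_eq: "cspan B = cvs.span B" unfolding cspan_def by simp
lemma cdependent_eq: "cdependent B = cvs.dependent B" unfolding cdependent_def by simp

lemma scaleC_real: "complex_of_real r *\<^sub>C x = r *\<^sub>R (x::'a::complex_vector)"
  by (simp add: scaleR_scaleC)

lemma cinner_add_right: "cinner x (y + z) = cinner x y + cinner x (z::'a::complex_inner)"
  by (metis cinner_add_left cinner_commute complex_cnj_add)

lemma cinner_scaleC_right: "cinner x (c *\<^sub>C y) = c * cinner x (y::'a::complex_inner)"
  by (metis cinner_commute cinner_scaleC_left complex_cnj_cnj complex_cnj_mult)

lemma cinner_zero_left[simp]: "cinner 0 (x::'a::complex_inner) = 0"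
  using cinner_add_left[of 0 0 x] by simp

lemma cinner_zero_right[simp]: "cinner x (0::'a::complex_inner) = 0"
  using cinner_add_right[of x 0 0] by simp

lemma cinner_minus_left: "cinner (- x) (y::'a::complex_inner) = - cinner x y"
  using cinner_add_left[of x "-x" y] by (simp add: eq_neg_iff_add_eq_0 add.commute)

lemma cinner_minus_right: "cinner x (- y::'a::complex_inner) = - cinner x y"
  using cinner_add_right[of x y "-y"] by (simp add: eq_neg_iff_add_eq_0 add.commute)

lemma cinner_diff_left: "cinner (x - y) (z::'a::complex_inner) = cinner x z - cinner y z"
  unfolding diff_conv_add_uminus by (simp only: cinner_add_left cinner_minus_left)

lemma cinner_diff_right: "cinner x (y - z::'a::complex_inner) = cinner x y - cinner x z"
  unfolding diff_conv_add_uminus by (simp only: cinner_add_right cinner_minus_right)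

lemma norm_sq_cinner: "(norm x)\<^sup>2 = Re (cinner x (x::'a::complex_inner))"
  by (simp add: norm_eq_sqrt_cinner cinner_nonneg)

lemma Im_cinner_self: "Im (cinner x (x::'a::complex_inner)) = 0"
  using cinner_commute[of x x] by (metis cnj.simps(2) neg_equal_zero)

lemma Re_cinner_swap: "Re (cinner y x) = Re (cinner x (y::'a::complex_inner))"
  using cinner_commute[of y x] by simp

lemma norm_add_sq: "(norm (x + y))\<^sup>2 = (norm x)\<^sup>2 + (norm y)\<^sup>2 + 2 * Re (cinner x (y::'a::complex_inner))"
  unfolding norm_sq_cinner by (simp add: cinner_add_left cinner_add_right Re_cinner_swap[of y x])

lemma norm_diff_sq: "(norm (x - y))\<^sup>2 = (norm x)\<^sup>2 + (norm y)\<^sup>2 - 2 * Re (cinner x (y::'a::complex_inner))"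
  unfolding norm_sq_cinner by (simp add: cinner_diff_left cinner_diff_right Re_cinner_swap[of y x])

lemma cinner_self_real: "cinner x x = complex_of_real ((norm (x::'a::complex_inner))\<^sup>2)"
  using Im_cinner_self[of x] norm_sq_cinner[of x] by (simp add: complex_eq_iff)

lemma norm_scaleC: "norm (c *\<^sub>C x) = cmod c * norm (x::'a::complex_inner)"
proof -
  have "cinner (c *\<^sub>C x) (c *\<^sub>C x) = (c * cnj c) * complex_of_real ((norm x)\<^sup>2)"
    by (simp add: cinner_scaleC_left cinner_scaleC_right cinner_self_real[of x] mult_ac)
  also have "c * cnj c = complex_of_real ((cmod c)\<^sup>2)" using complex_norm_square[of c] by simp
  finally have "(norm (c *\<^sub>C x))\<^sup>2 = (cmod c * norm x)\<^sup>2"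
    unfolding norm_sq_cinner[of "c *\<^sub>C x"] by (simp add: power_mult_distrib)
  then show ?thesis by (simp add: power2_eq_iff_nonneg)
qed



lemma closed_csubspace_diff: "closed_csubspace M \<Longrightarrow> x \<in> M \<Longrightarrow> y \<in> M \<Longrightarrow> x - y \<in> M"
  unfolding closed_csubspace_def
  by (metis cvs.scale_minus_left diff_conv_add_uminus scaleC_one)

lemma closed_csubspace_scaleR: "closed_csubspace M \<Longrightarrow> x \<in> M \<Longrightarrow> r *\<^sub>R x \<in> M"
  unfolding closed_csubspace_def scaleR_scaleC by blast

lemma parallelogram:
  fixes u v :: "'a::complex_inner"
  shows "(norm (v - u))\<^sup>2 + (norm (u + v))\<^sup>2 = 2 * (norm u)\<^sup>2 + 2 * (norm v)\<^sup>2"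
  unfolding norm_add_sq norm_diff_sq using Re_cinner_swap[of u v] by simp

lemma quad_aux:
  fixes A N :: real
  assumes "0 \<le> A" "0 \<le> N" "0 \<le> (1/(N+1))\<^sup>2 * A * N - 2 * (1/(N+1)) * A"
  shows "A = 0"
proof -
  define t where "t = 1/(N+1)"
  have t0: "t > 0" and tN: "t * N < 1" using assms(2) unfolding t_def by (auto simp: field_simps)
  have "0 \<le> t * (A * (t * N - 2))" using assms(3) unfolding t_def[symmetric]
    by (simp add: power2_eq_square algebra_simps)
  then have "0 \<le> A * (t * N - 2)" using t0 by (simp add: zero_le_mult_iff)
  then have "A \<le> 0" using tN by (simp add: zero_le_mult_iff)
  then show ?thesis using assms(1) by simp
qed

lemma orth_from_min:
  fixes z m :: "'a::complex_inner"
  assumes "\<And>c. (norm z)\<^sup>2 \<le> (norm (z - c *\<^sub>C m))\<^sup>2"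
  shows "cinner z m = 0"
proof -
  define w where "w = cinner z m"
  define N where "N = (norm m)\<^sup>2"
  define t where "t = 1 / (N + 1)"
  define c where "c = complex_of_real t * cnj w"
  have "(norm z)\<^sup>2 \<le> (norm z)\<^sup>2 + (cmod c * norm m)\<^sup>2 - 2 * Re (c * w)"
    using assms[of c] unfolding norm_diff_sq norm_scaleC cinner_scaleC_right w_def by simp
  moreover have "c * w = complex_of_real (t * (cmod w)\<^sup>2)"
    unfolding c_def using complex_norm_square[of w] by (simp add: mult_ac)
  then have "Re (c * w) = t * (cmod w)\<^sup>2" by simp
  moreover have "t \<ge> 0" unfolding t_def N_def by simp
  then have "cmod c = t * cmod w" unfolding c_def by (simp add: norm_mult)
  then have "(cmod c * norm m)\<^sup>2 = t\<^sup>2 * (cmod w)\<^sup>2 * N"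
    unfolding N_def by (simp add: power_mult_distrib)
  ultimately have "0 \<le> t\<^sup>2 * (cmod w)\<^sup>2 * N - 2 * t * (cmod w)\<^sup>2" by simp
  then have "(cmod w)\<^sup>2 = 0" using quad_aux[of "(cmod w)\<^sup>2" N] unfolding t_def N_def by simp
  then show ?thesis unfolding w_def by simp
qed

lemma infdist_approx:
  assumes "A \<noteq> {}" "e > 0"
  shows "\<exists>a\<in>A. dist x a < infdist x A + e"
proof (rule ccontr)
  assume "\<not> ?thesis"
  then have "\<forall>a\<in>A. infdist x A + e \<le> dist x a" by auto
  then have "infdist x A + e \<le> infdist x A"
    unfolding infdist_notempty[OF assms(1)] by (intro cINF_greatest assms(1)) auto
  then show False using assms by simp
qed

lemma proj_exists:
  fixes x :: "'a::chilbert"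
  assumes M: "closed_csubspace M"
  shows "\<exists>p\<in>M. \<forall>m\<in>M. cinner m (x - p) = 0"
proof -
  have M0: "0 \<in> M" using M unfolding closed_csubspace_def by auto
  define d where "d = infdist x M"
  have d0: "0 \<le> d" unfolding d_def by (rule infdist_nonneg)
  define e where "e n = inverse (real (Suc n))" for n
  have epos: "e n > 0" for n unfolding e_def by simp
  have ele1: "e n \<le> 1" for n unfolding e_def by (simp add: inverse_le_1_iff)
  have "\<forall>n. \<exists>a\<in>M. dist x a < d + e n"
    using infdist_approx[of M "e _" x] M0 epos unfolding d_def by auto
  then obtain m where mM: "\<And>n. m n \<in> M" and md: "\<And>n. dist x (m n) < d + e n"
    by metis
  have dle: "d \<le> dist x a" if "a \<in> M" for a unfolding d_def using that by (rule infdist_le)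
  have par: "(norm (m k - m n))\<^sup>2 \<le> (4*d + 2) * (e k + e n)" for k n
  proof -
    let ?u = "x - m k" and ?v = "x - m n"
    have mid: "(1/2::real) *\<^sub>R (m k + m n) \<in> M"
      using M mM unfolding closed_csubspace_def scaleR_scaleC by blast
    have eq1: "m k - m n = ?v - ?u" by simp
    have eq2: "?u + ?v = 2 *\<^sub>R (x - (1/2::real) *\<^sub>R (m k + m n))"
      by (simp add: algebra_simps scaleR_2)
    have n2: "(norm (?u + ?v))\<^sup>2 = 4 * (norm (x - (1/2::real) *\<^sub>R (m k + m n)))\<^sup>2"
      unfolding eq2 by (simp add: power_mult_distrib)
    have dmid: "d \<le> norm (x - (1/2::real) *\<^sub>R (m k + m n))"
      using dle[OF mid] by (simp add: dist_norm)
    have "d\<^sup>2 \<le> (norm (x - (1/2::real) *\<^sub>R (m k + m n)))\<^sup>2"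
      using dmid d0 by (simp add: power_mono)
    moreover have "norm ?u \<le> d + e k" "norm ?v \<le> d + e n"
      using md[of k] md[of n] by (auto simp: dist_norm)
    then have "(norm ?u)\<^sup>2 \<le> (d + e k)\<^sup>2" "(norm ?v)\<^sup>2 \<le> (d + e n)\<^sup>2"
      by (auto intro: power_mono)
    moreover have e1: "?v - ?u = m k - m n" by simp
    have "(norm (m k - m n))\<^sup>2 + (norm (?u + ?v))\<^sup>2 = 2 * (norm ?u)\<^sup>2 + 2 * (norm ?v)\<^sup>2"
      using parallelogram[where u="?u" and v="?v"] unfolding e1 .
    ultimately have "(norm (m k - m n))\<^sup>2 \<le> 2 * (d + e k)\<^sup>2 + 2 * (d + e n)\<^sup>2 - 4 * d\<^sup>2"
      unfolding n2 by linarith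
    also have "\<dots> = 4 * d * (e k + e n) + 2 * ((e k)\<^sup>2 + (e n)\<^sup>2)"
      by (simp add: power2_eq_square algebra_simps)
    also have "\<dots> \<le> 4 * d * (e k + e n) + 2 * (e k + e n)"
    proof -
      have "(e k)\<^sup>2 \<le> e k" "(e n)\<^sup>2 \<le> e n" using ele1 epos
        by (auto simp: power2_eq_square intro!: mult_left_le_one_le less_imp_le)
      then show ?thesis by simp
    qed
    finally show ?thesis by (simp add: algebra_simps)
  qed
  have "Cauchy m"
  proof (rule metric_CauchyI)
    fix \<epsilon> :: real assume "\<epsilon> > 0"
    then have "\<epsilon>\<^sup>2 / (8*d+4) > 0" using d0 by simp
    then obtain N where N: "inverse (real (Suc N)) < \<epsilon>\<^sup>2 / (8*d+4)"
      using reals_Archimedean by blast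
    show "\<exists>N. \<forall>k\<ge>N. \<forall>n\<ge>N. dist (m k) (m n) < \<epsilon>"
    proof (intro exI allI impI)
      fix k n assume kn: "N \<le> k" "N \<le> n"
      have ek: "e k \<le> e N" "e n \<le> e N" using kn unfolding e_def
        by (auto intro!: le_imp_inverse_le)
      have "(norm (m k - m n))\<^sup>2 \<le> (4*d + 2) * (e k + e n)" by (rule par)
      also have "\<dots> \<le> (4*d+2) * (2 * e N)" using ek d0 by (intro mult_left_mono) auto
      also have "\<dots> < (4*d+2) * (2 * (\<epsilon>\<^sup>2 / (8*d+4)))" using N d0 unfolding e_def
        by (intro mult_strict_left_mono) auto
      also have "\<dots> = \<epsilon>\<^sup>2" using d0 by (simp add: field_simps)
      finally have "(norm (m k - m n))\<^sup>2 < \<epsilon>\<^sup>2" .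
      then show "dist (m k) (m n) < \<epsilon>" using \<open>\<epsilon> > 0\<close>
        by (simp add: dist_norm power_less_imp_less_base)
    qed
  qed
  then obtain p where lim: "m \<longlonglongrightarrow> p" using Cauchy_convergent_iff convergent_def by blast
  have pM: "p \<in> M" using M mM lim unfolding closed_csubspace_def
    using closed_sequentially by blast
  have "dist x p \<le> d"
  proof (rule LIMSEQ_le)
    show "(\<lambda>n. dist x (m n)) \<longlonglongrightarrow> dist x p" by (intro tendsto_intros lim)
    show "(\<lambda>n. d + e n) \<longlonglongrightarrow> d" unfolding e_def
      using tendsto_add[OF tendsto_const LIMSEQ_inverse_real_of_nat] by simp
    show "\<exists>N. \<forall>n\<ge>N. dist x (m n) \<le> d + e n" using md less_imp_le by blast
  qed
  have "cinner (x - p) q = 0" if qM: "q \<in> M" for q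
  proof (rule orth_from_min)
    fix c
    have "p + c *\<^sub>C q \<in> M" using M pM qM unfolding closed_csubspace_def by blast
    then have "d \<le> norm (x - p - c *\<^sub>C q)" using dle[of "p + c *\<^sub>C q"]
      by (simp add: dist_norm algebra_simps)
    then have "norm (x - p) \<le> norm (x - p - c *\<^sub>C q)" using \<open>dist x p \<le> d\<close>
      by (simp add: dist_norm)
    then show "(norm (x - p))\<^sup>2 \<le> (norm (x - p - c *\<^sub>C q))\<^sup>2" by (simp add: power_mono)
  qed
  then show ?thesis using pM by (metis cinner_commute complex_cnj_zero)
qed



definition proj :: "'a::chilbert set \<Rightarrow> 'a \<Rightarrow> 'a" where
  "proj M x = (SOME p. p \<in> M \<and> (\<forall>m\<in>M. cinner m (x - p) = 0))"

context
  fixes M :: "'a::chilbert set"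
  assumes M: "closed_csubspace M"
begin

lemma proj_prop: "proj M x \<in> M \<and> (\<forall>m\<in>M. cinner m (x - proj M x) = 0)"
proof -
  have "\<exists>p. p \<in> M \<and> (\<forall>m\<in>M. cinner m (x - p) = 0)" using proj_exists[OF M, of x] by blast
  then show ?thesis unfolding proj_def by (rule someI_ex)
qed

lemma proj_in: "proj M x \<in> M" using proj_prop by blast
lemma proj_orth: "m \<in> M \<Longrightarrow> cinner m (x - proj M x) = 0" using proj_prop by blast

lemma proj_unique:
  assumes p: "p \<in> M" and o: "\<And>m. m \<in> M \<Longrightarrow> cinner m (x - p) = 0"
  shows "proj M x = p"
proof -
  let ?q = "proj M x"
  have d: "?q - p \<in> M" using closed_csubspace_diff[OF M proj_in p] .
  have "cinner (?q - p) (?q - p) = cinner (?q - p) ((x - p) - (x - ?q))" by simp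
  also have "\<dots> = cinner (?q - p) (x - p) - cinner (?q - p) (x - ?q)" by (rule cinner_diff_right)
  also have "\<dots> = 0" using o[OF d] proj_orth[OF d, of x] by simp
  finally have "?q - p = 0" by (simp only: cinner_eq_zero_iff)
  then show ?thesis by (simp only: right_minus_eq)
qed

lemma proj_id: "m \<in> M \<Longrightarrow> proj M m = m"
  by (rule proj_unique) auto

lemma proj_add: "proj M (x + y) = proj M x + proj M y"
proof (rule proj_unique)
  show "proj M x + proj M y \<in> M" using M proj_in unfolding closed_csubspace_def by blast
  fix m assume "m \<in> M"
  have eq: "x + y - (proj M x + proj M y) = (x - proj M x) + (y - proj M y)" by simp
  show "cinner m (x + y - (proj M x + proj M y)) = 0"
    unfolding eq cinner_add_right proj_orth[OF \<open>m \<in> M\<close>] by simp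
qed

lemma proj_scale: "proj M (c *\<^sub>C x) = c *\<^sub>C proj M x"
proof (rule proj_unique)
  show "c *\<^sub>C proj M x \<in> M" using M proj_in unfolding closed_csubspace_def by blast
  fix m assume "m \<in> M"
  have "c *\<^sub>C x - c *\<^sub>C proj M x = c *\<^sub>C (x - proj M x)" by (simp add: cvs.scale_right_diff_distrib)
  then show "cinner m (c *\<^sub>C x - c *\<^sub>C proj M x) = 0"
    using proj_orth[OF \<open>m \<in> M\<close>] by (simp add: cinner_scaleC_right)
qed

lemma proj_norm: "norm (proj M x) \<le> norm x"
proof -
  have "(norm x)\<^sup>2 = (norm (proj M x + (x - proj M x)))\<^sup>2" by simp
  also have "\<dots> = (norm (proj M x))\<^sup>2 + (norm (x - proj M x))\<^sup>2"
    unfolding norm_add_sq proj_orth[OF proj_in] by simp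
  finally have "(norm (proj M x))\<^sup>2 \<le> (norm x)\<^sup>2" by simp
  then show ?thesis by (rule power2_le_imp_le) simp
qed

lemma proj_residual: "proj M (x - proj M x) = 0"
proof (rule proj_unique)
  show "0 \<in> M" using M unfolding closed_csubspace_def by blast
  fix m assume "m \<in> M"
  then show "cinner m (x - proj M x - 0) = 0" using proj_orth[of m x] by simp
qed

end

lemma clinear_hom: "clinear f \<Longrightarrow> module_hom scaleC scaleC f"
  unfolding clinear_def
  by (intro module_hom.intro cvs.module_axioms module_hom_axioms.intro) auto

lemma clinear_zero: "clinear f \<Longrightarrow> f 0 = 0" using module_hom.zero[OF clinear_hom] .
lemma clinear_diff: "clinear f \<Longrightarrow> f (x - y) = f x - f y" using module_hom.diff[OF clinear_hom] .
lemma clinear_add: "clinear f \<Longrightarrow> f (x + y) = f x + f y" unfolding clinear_def by blast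
lemma clinear_scale: "clinear f \<Longrightarrow> f (c *\<^sub>C x) = c *\<^sub>C f x" unfolding clinear_def by blast

lemma bounded_clinear_linear: "bounded_clinear f \<Longrightarrow> bounded_linear f"
proof -
  assume f: "bounded_clinear f"
  then obtain K where K: "\<And>x. norm (f x) \<le> norm x * K" unfolding bounded_clinear_def by blast
  have l: "clinear f" using f unfolding bounded_clinear_def by blast
  show ?thesis
    by (rule bounded_linear_intro[where K=K])
      (auto simp: scaleR_scaleC clinear_add[OF l] clinear_scale[OF l] K)
qed

lemma not_cfinite_dim_image:
  assumes f: "clinear f" "inj f" and W: "\<not> cfinite_dim W" and E: "f ` W \<subseteq> E"
  shows "\<not> cfinite_dim E"
proof
  assume "cfinite_dim E"
  then obtain C where C: "finite C" "E \<subseteq> cspan C" unfolding cfinite_dim_def by blast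
  obtain B where B: "B \<subseteq> W" "cvs.independent B" "W \<subseteq> cvs.span B"
    using cvs.maximal_independent_subset by blast
  have "infinite B" using W B unfolding cfinite_dim_def cspan_eq by blast
  have "cvs.independent (f ` B)"
    using module_hom.independent_injective_image[OF clinear_hom[OF f(1)] B(2)] f(2)
    by (meson inj_on_subset subset_UNIV)
  moreover have "f ` B \<subseteq> cvs.span C" using B E C unfolding cspan_eq by blast
  ultimately have "finite (f ` B)" using cvs.independent_span_bound[OF C(1)] by blast
  then show False using \<open>infinite B\<close> f(2) by (simp add: finite_image_iff inj_on_subset)
qed

lemma infdim_UNIV:
  assumes "infinite_dimensional_space TYPE('a::complex_vector)"
  shows "\<not> cfinite_dim (UNIV :: 'a set)"
proof
  assume "cfinite_dim (UNIV :: 'a set)"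
  then obtain C :: "'a set" where C: "finite C" "UNIV \<subseteq> cspan C" unfolding cfinite_dim_def by blast
  obtain S :: "'a set" where S: "infinite S" "\<not> cdependent S"
    using assms unfolding infinite_dimensional_space_def by blast
  then show False using cvs.independent_span_bound[OF C(1), of S] C(2)
    unfolding cdependent_eq cspan_eq by blast
qed



definition Rop :: "('a::complex_vector \<Rightarrow> 'a) \<Rightarrow> complex \<Rightarrow> 'a \<Rightarrow> 'a" where
  "Rop V l u = (THE d. d = u + l *\<^sub>C V d)"

context
  fixes V :: "'a::chilbert \<Rightarrow> 'a" and K :: real
  assumes V: "bounded_clinear V" and K: "\<And>x. norm (V x) \<le> norm x * K" and Kpos: "K > 0"
begin

lemma Vlin: "clinear V" using V unfolding bounded_clinear_def by blast

lemma R_ex1: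
  assumes l: "cmod l * K \<le> 1/2"
  shows "\<exists>!d. d = u + l *\<^sub>C V d"
proof -
  have "\<exists>!x. (\<lambda>d. u + l *\<^sub>C V d) x = x"
  proof (rule banach_fix_type[where c="cmod l * K"])
    show "0 \<le> cmod l * K" using Kpos by simp
    show "cmod l * K < 1" using l by simp
    show "\<forall>x y. dist (u + l *\<^sub>C V x) (u + l *\<^sub>C V y) \<le> cmod l * K * dist x y"
    proof (intro allI)
      fix x y
      have "dist (u + l *\<^sub>C V x) (u + l *\<^sub>C V y) = norm (l *\<^sub>C V (x - y))"
        by (simp add: dist_norm clinear_diff[OF Vlin] cvs.scale_right_diff_distrib)
      also have "\<dots> = cmod l * norm (V (x - y))" by (rule norm_scaleC)
      also have "\<dots> \<le> cmod l * (norm (x - y) * K)" by (intro mult_left_mono K) simp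
      finally show "dist (u + l *\<^sub>C V x) (u + l *\<^sub>C V y) \<le> cmod l * K * dist x y"
        by (simp add: dist_norm mult_ac)
    qed
  qed
  then show ?thesis by metis
qed

lemma R_eq: "cmod l * K \<le> 1/2 \<Longrightarrow> Rop V l u = u + l *\<^sub>C V (Rop V l u)"
  unfolding Rop_def by (rule theI') (rule R_ex1)

lemma R_unique:
  assumes l: "cmod l * K \<le> 1/2" and d: "d = u + l *\<^sub>C V d"
  shows "Rop V l u = d"
  unfolding Rop_def by (rule the1_equality[OF R_ex1[OF l] d])

lemma R_norm:
  assumes l: "cmod l * K \<le> 1/2"
  shows "norm (Rop V l u) \<le> 2 * norm u"
proof -
  let ?d = "Rop V l u"
  have "norm ?d \<le> norm u + norm (l *\<^sub>C V ?d)"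
    using R_eq[OF l, of u] by (metis norm_triangle_ineq)
  also have "norm (l *\<^sub>C V ?d) = cmod l * norm (V ?d)" by (rule norm_scaleC)
  also have "\<dots> \<le> cmod l * (norm ?d * K)" by (intro mult_left_mono K) simp
  also have "\<dots> = (cmod l * K) * norm ?d" by (simp add: mult_ac)
  also have "\<dots> \<le> 1/2 * norm ?d" by (rule mult_right_mono[OF l norm_ge_zero])
  finally show ?thesis by simp
qed

lemma R_add:
  assumes l: "cmod l * K \<le> 1/2"
  shows "Rop V l (u + v) = Rop V l u + Rop V l v"
proof (rule R_unique[OF l])
  have "Rop V l u + Rop V l v = (u + l *\<^sub>C V (Rop V l u)) + (v + l *\<^sub>C V (Rop V l v))"
    using arg_cong2[OF R_eq[OF l, of u] R_eq[OF l, of v], of "(+)"] .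
  also have "\<dots> = (u + v) + l *\<^sub>C V (Rop V l u + Rop V l v)"
    by (simp add: clinear_add[OF Vlin] cvs.scale_right_distrib algebra_simps)
  finally show "Rop V l u + Rop V l v = (u + v) + l *\<^sub>C V (Rop V l u + Rop V l v)" .
qed

lemma R_scale:
  assumes l: "cmod l * K \<le> 1/2"
  shows "Rop V l (c *\<^sub>C u) = c *\<^sub>C Rop V l u"
proof (rule R_unique[OF l])
  have "c *\<^sub>C Rop V l u = c *\<^sub>C (u + l *\<^sub>C V (Rop V l u))"
    using arg_cong[OF R_eq[OF l, of u], of "scaleC c"] .
  also have "\<dots> = c *\<^sub>C u + l *\<^sub>C V (c *\<^sub>C Rop V l u)"
    by (simp add: clinear_scale[OF Vlin] cvs.scale_right_distrib mult.commute)
  finally show "c *\<^sub>C Rop V l u = c *\<^sub>C u + l *\<^sub>C V (c *\<^sub>C Rop V l u)" .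
qed

lemma R_clinear: "cmod l * K \<le> 1/2 \<Longrightarrow> clinear (Rop V l)"
  unfolding clinear_def by (intro conjI allI R_add R_scale)

lemma R_bounded: "cmod l * K \<le> 1/2 \<Longrightarrow> bounded_linear (Rop V l)"
proof -
  assume l: "cmod l * K \<le> 1/2"
  show ?thesis
  proof (rule bounded_linear_intro[where K=2])
    show "Rop V l (x + y) = Rop V l x + Rop V l y" for x y by (rule R_add[OF l])
    show "Rop V l (r *\<^sub>R x) = r *\<^sub>R Rop V l x" for r x unfolding scaleR_scaleC by (rule R_scale[OF l])
    show "norm (Rop V l x) \<le> norm x * 2" for x using R_norm[OF l, of x] by (simp add: mult.commute)
  qed
qed

lemma R_inj: "cmod l * K \<le> 1/2 \<Longrightarrow> inj (Rop V l)"
proof (rule injI)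
  fix x y assume l: "cmod l * K \<le> 1/2" and e: "Rop V l x = Rop V l y"
  have x: "Rop V l x - l *\<^sub>C V (Rop V l x) = x"
    using arg_cong[OF R_eq[OF l, of x], of "\<lambda>a. a - l *\<^sub>C V (Rop V l x)"] by simp
  have y: "Rop V l y - l *\<^sub>C V (Rop V l y) = y"
    using arg_cong[OF R_eq[OF l, of y], of "\<lambda>a. a - l *\<^sub>C V (Rop V l y)"] by simp
  show "x = y" by (metis x y e)
qed

lemma R_diff:
  assumes l: "cmod l * K \<le> 1/2" and m: "cmod m * K \<le> 1/2"
  shows "Rop V m u - Rop V l u = (m - l) *\<^sub>C Rop V l (V (Rop V m u))"
proof -
  let ?g = "Rop V m u - Rop V l u"
  have "?g = (u + m *\<^sub>C V (Rop V m u)) - (u + l *\<^sub>C V (Rop V l u))"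
    using arg_cong2[OF R_eq[OF m, of u] R_eq[OF l, of u], of "(-)"] .
  also have "\<dots> = (m - l) *\<^sub>C V (Rop V m u) + l *\<^sub>C V ?g"
    by (simp add: clinear_diff[OF Vlin] cvs.scale_right_diff_distrib cvs.scale_left_diff_distrib)
  finally have "Rop V l ((m - l) *\<^sub>C V (Rop V m u)) = ?g" by (rule R_unique[OF l])
  then show ?thesis using R_scale[OF l] by simp
qed

lemma R_eigen:
  assumes l: "cmod l * K \<le> 1/2" and T: "clinear T" and TV: "\<And>x. T (V x) = x" and w: "T w = 0"
  shows "T (Rop V l w) = l *\<^sub>C Rop V l w"
proof -
  have "T (Rop V l w) = T (w + l *\<^sub>C V (Rop V l w))"
    using arg_cong[OF R_eq[OF l, of w], of T] .
  also have "\<dots> = l *\<^sub>C Rop V l w" using T TV w by (simp add: clinear_add clinear_scale)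
  finally show ?thesis .
qed

end


lemma bounded_clinear_zero: "bounded_clinear (\<lambda>x::'a::complex_inner. 0::'a)"
  unfolding bounded_clinear_def clinear_def by (auto intro!: exI[where x=0] cvs.scale_zero_right)

lemma bounded_clinear_id: "bounded_clinear (\<lambda>x::'a::complex_inner. x)"
  unfolding bounded_clinear_def clinear_def by (auto intro!: exI[where x=1])

lemma sim_emb:
  assumes "similar_restr M U S"
  shows "\<exists>Ji. bounded_clinear Ji \<and> inj Ji \<and> (\<forall>v. U (Ji v) = Ji (S v))"
proof -
  obtain J Ji where Ji: "bounded_clinear Ji" and JJi: "\<And>x. Ji x \<in> M \<and> J (Ji x) = x"
    and US: "\<And>y. y \<in> M \<Longrightarrow> U y = Ji (S (J y))"
    using assms unfolding similar_restr_def by metis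
  have "inj Ji" by (metis JJi injI)
  moreover have "U (Ji v) = Ji (S v)" for v using US[of "Ji v"] JJi[of v] by simp
  ultimately show ?thesis using Ji by blast
qed

lemma bounded_clinear_clinear: "bounded_clinear f \<Longrightarrow> clinear f"
  unfolding bounded_clinear_def by blast

lemma fredholm_usf: "fredholm A \<Longrightarrow> upper_semi_fredholm A"
  unfolding fredholm_def upper_semi_fredholm_def by blast

lemma cinvertible_fredholm:
  assumes "cinvertible A" shows "fredholm A"
proof -
  obtain R where R: "bounded_clinear R" "\<And>x. R (A x) = x" "\<And>x. A (R x) = x"
    using assms unfolding cinvertible_def by blast
  have R0: "R 0 = 0" using clinear_zero[OF bounded_clinear_clinear[OF R(1)]] .
  have "{x. A x = 0} \<subseteq> cspan {}"
  proof
    fix x assume "x \<in> {x. A x = 0}"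
    then have "x = 0" using R(2)[of x] R0 by simp
    then show "x \<in> cspan {}" unfolding cspan_eq by simp
  qed
  then have k: "cfinite_dim {x. A x = 0}" unfolding cfinite_dim_def by blast
  have "range A = UNIV" using R(3) by (metis surjI)
  then have c: "closed (range A)" by simp
  have "\<forall>x. \<exists>y z. x = A y + z \<and> z \<in> cspan {}"
    using R(3) unfolding cspan_eq by (metis add.right_neutral cvs.span_zero)
  then show ?thesis unfolding fredholm_def using k c by blast
qed

lemma cfinite_dim_nonzero:
  assumes "\<not> cfinite_dim E" shows "\<exists>x\<in>E. x \<noteq> 0"
proof (rule ccontr)
  assume "\<not> ?thesis"
  then have "E \<subseteq> cspan {}" unfolding cspan_eq by auto
  then show False using assms unfolding cfinite_dim_def by blast
qed

lemma bounded_linear_scaleC: "bounded_linear (\<lambda>x::'a::complex_inner. c *\<^sub>C x)"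
  by (rule bounded_linear_intro[where K="cmod c"])
    (auto simp: scaleR_scaleC cvs.scale_right_distrib norm_scaleC mult.commute)



lemma holo_aux:
  fixes V G :: "'a::chilbert \<Rightarrow> 'a"
  assumes V: "bounded_clinear V" and Kb: "\<And>x. norm (V x) \<le> norm x * K" and Kpos: "K > 0"
    and G: "bounded_clinear G" and c: "c \<noteq> 0"
    and lsmall: "\<And>z. z \<in> S \<Longrightarrow> cmod (z / c) * K \<le> 1/2"
  shows "vholomorphic_on (\<lambda>z. G (Rop V (z / c) w0)) S"
  unfolding vholomorphic_on_def
proof
  fix z assume zS: "z \<in> S"
  define l where "l = z / c"
  have lz: "cmod l * K \<le> 1/2" unfolding l_def by (rule lsmall[OF zS])
  have Gl: "clinear G" by (rule bounded_clinear_clinear[OF G])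
  have cont: "((\<lambda>w. Rop V (w / c) w0) \<longlongrightarrow> Rop V l w0) (at z within S)"
  proof (rule LIM_zero_cancel)
    show "((\<lambda>w. Rop V (w / c) w0 - Rop V l w0) \<longlongrightarrow> 0) (at z within S)"
    proof (rule tendsto_0_le[where f="\<lambda>w. w - z" and K="4 * K * norm w0 / cmod c"])
      show "((\<lambda>w. w - z) \<longlongrightarrow> 0) (at z within S)" by (intro LIM_zero tendsto_ident_at)
      have "norm (Rop V (w / c) w0 - Rop V l w0) \<le> norm (w - z) * (4 * K * norm w0 / cmod c)"
        if wS: "w \<in> S" for w
      proof -
        define m where "m = w / c"
        have lw: "cmod m * K \<le> 1/2" unfolding m_def by (rule lsmall[OF wS])
        have "Rop V m w0 - Rop V l w0 = (m - l) *\<^sub>C Rop V l (V (Rop V m w0))"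
          by (rule R_diff[OF V Kb Kpos lz lw])
        then have "norm (Rop V m w0 - Rop V l w0) = cmod (m - l) * norm (Rop V l (V (Rop V m w0)))"
          by (simp add: norm_scaleC)
        also have "\<dots> \<le> cmod (m - l) * (2 * norm (V (Rop V m w0)))"
          by (intro mult_left_mono R_norm[OF V Kb Kpos lz]) simp
        also have "\<dots> \<le> cmod (m - l) * (2 * (norm (Rop V m w0) * K))"
          by (intro mult_left_mono Kb) simp_all
        also have "\<dots> \<le> cmod (m - l) * (2 * ((2 * norm w0) * K))"
          using R_norm[OF V Kb Kpos lw, of w0] Kpos
          by (intro mult_left_mono) simp_all
        also have "cmod (m - l) = norm (w - z) / cmod c"
          unfolding m_def l_def by (simp add: diff_divide_distrib[symmetric] norm_divide)
        finally show ?thesis unfolding m_def by (simp add: field_simps)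
      qed
      then show "\<forall>\<^sub>F w in at z within S. norm (Rop V (w / c) w0 - Rop V l w0) \<le> norm (w - z) * (4 * K * norm w0 / cmod c)"
        unfolding eventually_at_filter by (intro always_eventually) blast
    qed
  qed
  define h where "h x = inverse c *\<^sub>C G (Rop V l (V x))" for x
  have hb: "bounded_linear h" unfolding h_def
    by (intro bounded_linear_compose[OF bounded_linear_scaleC] bounded_linear_compose[OF bounded_clinear_linear[OF G]]
        bounded_linear_compose[OF R_bounded[OF V Kb Kpos lz]] bounded_clinear_linear[OF V])
  have lim: "((\<lambda>w. h (Rop V (w / c) w0)) \<longlongrightarrow> h (Rop V l w0)) (at z within S)"
    by (rule bounded_linear.tendsto[OF hb cont])
  have eq: "h (Rop V (w / c) w0) = inverse (w - z) *\<^sub>C (G (Rop V (w / c) w0) - G (Rop V (z / c) w0))"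
    if "w \<in> S" "w \<noteq> z" for w
  proof -
    define m where "m = w / c"
    have lw: "cmod m * K \<le> 1/2" unfolding m_def by (rule lsmall[OF that(1)])
    have "G (Rop V m w0) - G (Rop V l w0) = G ((m - l) *\<^sub>C Rop V l (V (Rop V m w0)))"
      by (simp add: R_diff[OF V Kb Kpos lz lw] clinear_diff[OF Gl, symmetric])
    also have "\<dots> = (m - l) *\<^sub>C G (Rop V l (V (Rop V m w0)))" by (rule clinear_scale[OF Gl])
    finally have "inverse (w - z) *\<^sub>C (G (Rop V m w0) - G (Rop V l w0))
       = (inverse (w - z) * (m - l)) *\<^sub>C G (Rop V l (V (Rop V m w0)))"
      by (simp add: scaleC_scaleC)
    also have "inverse (w - z) * (m - l) = inverse c"
      unfolding m_def l_def using that(2) c by (simp add: field_simps)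
    finally show ?thesis unfolding h_def m_def l_def by simp
  qed
  have "((\<lambda>w. inverse (w - z) *\<^sub>C (G (Rop V (w / c) w0) - G (Rop V (z / c) w0))) \<longlongrightarrow> h (Rop V l w0)) (at z within S)"
  proof (rule Lim_transform_eventually[OF lim])
    show "\<forall>\<^sub>F w in at z within S. h (Rop V (w / c) w0) = inverse (w - z) *\<^sub>C (G (Rop V (w / c) w0) - G (Rop V (z / c) w0))"
      unfolding eventually_at_filter using eq by (intro always_eventually) blast
  qed
  then show "\<exists>d. ((\<lambda>w. inverse (w - z) *\<^sub>C (G (Rop V (w / c) w0) - G (Rop V (z / c) w0))) \<longlongrightarrow> d) (at z within S)"
    by blast
qed



theorem theorem2p2:
  fixes U :: "'a::chilbert \<Rightarrow> 'a"
  assumes "separable_space_type TYPE('a)"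
    and "infinite_dimensional_space TYPE('a)"
    and "bounded_clinear U"
    and "universal_op U"
  shows "(\<exists>r>0.
            ball 0 r \<subseteq> point_spectrum U \<inter> upper_essential_spectrum U \<and>
            point_spectrum U \<inter> upper_essential_spectrum U \<subseteq> essential_spectrum U \<and>
            essential_spectrum U \<subseteq> op_spectrum U \<and>
            (\<forall>l\<in>ball 0 r. \<not> cfinite_dim {x. U x = l *\<^sub>C x}))
       \<and> 0 \<in> interior (upper_essential_spectrum U)
       \<and> 0 \<in> interior (essential_spectrum U)
       \<and> 0 \<in> interior (point_spectrum U)
       \<and> 0 \<in> interior (op_spectrum U)
       \<and> (\<exists>r>0. \<exists>y :: complex \<Rightarrow> 'a.
            vholomorphic_on y (ball 0 r) \<and>
            (\<forall>z\<in>ball 0 r. U (y z) = z *\<^sub>C y z \<and> y z \<noteq> 0))"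
proof -
  have Ul: "clinear U" using assms(3) by (rule bounded_clinear_clinear)
  obtain M1 c1 where M1: "closed_csubspace M1" and sim1: "similar_restr M1 U (\<lambda>x. c1 *\<^sub>C 0)"
    using assms(4) bounded_clinear_zero unfolding universal_op_def by blast
  obtain J1 Ji1 :: "'a \<Rightarrow> 'a" where J1add: "\<forall>x\<in>M1. \<forall>y\<in>M1. J1 (x + y) = J1 x + J1 y"
    and J1sc: "\<forall>c. \<forall>x\<in>M1. J1 (c *\<^sub>C x) = c *\<^sub>C J1 x"
    and J1b': "\<exists>K. \<forall>x\<in>M1. norm (J1 x) \<le> norm x * K"
    and Ji1: "bounded_clinear Ji1" and JJi1: "\<forall>x. Ji1 x \<in> M1 \<and> J1 (Ji1 x) = x"
    and US1: "\<forall>y\<in>M1. U y = Ji1 (c1 *\<^sub>C 0)"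
    using sim1 unfolding similar_restr_def by blast
  obtain K1 where J1b: "\<forall>x\<in>M1. norm (J1 x) \<le> norm x * K1" using J1b' by blast
  have Ji1l: "clinear Ji1" by (rule bounded_clinear_clinear[OF Ji1])
  have U0: "U y = 0" if "y \<in> M1" for y
    using US1 that clinear_zero[OF Ji1l] by (simp add: cvs.scale_zero_right)
  define P where "P = proj M1"
  have PM: "P x \<in> M1" for x unfolding P_def by (rule proj_in[OF M1])
  define T0 where "T0 x = J1 (P x)" for x
  have M10: "0 \<in> M1" using M1 unfolding closed_csubspace_def by blast
  have J10: "J1 0 = 0" using J1sc M10 by (metis cvs.scale_zero_left)
  have T0l: "clinear T0"
    unfolding clinear_def
  proof (intro conjI allI)
    show "T0 (x + y) = T0 x + T0 y" for x y
      unfolding T0_def P_def proj_add[OF M1] using J1add proj_in[OF M1] by blast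
    show "T0 (c *\<^sub>C x) = c *\<^sub>C T0 x" for c x
      unfolding T0_def P_def proj_scale[OF M1] using J1sc proj_in[OF M1] by blast
  qed
  have T0b: "bounded_clinear T0"
    unfolding bounded_clinear_def
  proof (intro conjI T0l exI allI)
    fix x
    have "norm (T0 x) \<le> norm (P x) * K1" unfolding T0_def using J1b PM by blast
    also have "\<dots> \<le> norm (P x) * max K1 0" by (intro mult_left_mono) simp_all
    also have "\<dots> \<le> norm x * max K1 0" unfolding P_def by (intro mult_right_mono proj_norm[OF M1]) simp
    finally show "norm (T0 x) \<le> norm x * max K1 0" .
  qed
  have T0V: "T0 (Ji1 x) = x" for x
    unfolding T0_def P_def using proj_id[OF M1] JJi1 by metis
  define W where "W = {x. P x = 0}"
  have T0W: "T0 w = 0" if "w \<in> W" for w using that J10 unfolding W_def T0_def by simp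
  have Winf: "\<not> cfinite_dim W"
  proof
    assume "cfinite_dim W"
    then obtain B where B: "finite B" "W \<subseteq> cspan B" unfolding cfinite_dim_def by blast
    have rU: "U x \<in> cspan (U ` B)" for x
    proof -
      have "U x = U (P x + (x - P x))" by simp
      also have "\<dots> = U (P x) + U (x - P x)" by (rule clinear_add[OF Ul])
      also have "\<dots> = U (x - P x)" using U0[OF PM] by simp
      finally have e: "U x = U (x - P x)" .
      have "x - P x \<in> W" unfolding W_def P_def using proj_residual[OF M1] by simp
      then have "U (x - P x) \<in> U ` cspan B" using B by blast
      also have "U ` cspan B = cspan (U ` B)"
        unfolding cspan_eq by (rule module_hom.span_image[OF clinear_hom[OF Ul], symmetric])
      finally show ?thesis using e by simp
    qed
    obtain M3 c3 where c3: "c3 \<noteq> 0" and sim3: "similar_restr M3 U (\<lambda>x. c3 *\<^sub>C x)"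
      using assms(4) bounded_clinear_id unfolding universal_op_def by blast
    obtain Ji3 :: "'a \<Rightarrow> 'a" where Ji3: "bounded_clinear Ji3" "inj Ji3" and U3: "\<forall>v. U (Ji3 v) = Ji3 (c3 *\<^sub>C v)"
      using sim_emb[OF sim3] by blast
    have "Ji3 ` UNIV \<subseteq> cspan (U ` B)"
    proof clarify
      fix v
      have "U (Ji3 (inverse c3 *\<^sub>C v)) = Ji3 v" using U3 c3 by (simp add: scaleC_scaleC scaleC_one)
      then show "Ji3 v \<in> cspan (U ` B)" using rU by metis
    qed
    then have "\<not> cfinite_dim (cspan (U ` B))"
      using not_cfinite_dim_image[OF bounded_clinear_clinear[OF Ji3(1)] Ji3(2) infdim_UNIV[OF assms(2)]]
      by blast
    moreover have "cfinite_dim (cspan (U ` B))" unfolding cfinite_dim_def using B(1) by blast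
    ultimately show False by blast
  qed
  obtain M2 c2 where c2: "c2 \<noteq> 0" and sim2: "similar_restr M2 U (\<lambda>x. c2 *\<^sub>C T0 x)"
    using assms(4) T0b unfolding universal_op_def by blast
  obtain Ji2 :: "'a \<Rightarrow> 'a" where Ji2: "bounded_clinear Ji2" "inj Ji2" and U2: "\<forall>v. U (Ji2 v) = Ji2 (c2 *\<^sub>C T0 v)"
    using sim_emb[OF sim2] by blast
  have Ji2l: "clinear Ji2" by (rule bounded_clinear_clinear[OF Ji2(1)])
  obtain KV where KV: "\<And>x. norm (Ji1 x) \<le> norm x * KV" using Ji1 unfolding bounded_clinear_def by blast
  define K where "K = max KV 1"
  have Kb: "norm (Ji1 x) \<le> norm x * K" for x
    using KV[of x] mult_left_mono[of KV K "norm x"] unfolding K_def by simp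
  have Kpos: "K > 0" unfolding K_def by simp
  define r where "r = cmod c2 / (2 * K)"
  have rpos: "r > 0" unfolding r_def using c2 Kpos by simp
  have lsmall: "cmod (z / c2) * K \<le> 1/2" if "z \<in> ball 0 r" for z
  proof -
    have "cmod z < r" using that by simp
    then have "cmod z * K < cmod c2 / 2" unfolding r_def using Kpos by (simp add: field_simps)
    then show ?thesis using c2 by (simp add: norm_divide field_simps)
  qed
  have eig: "U (Ji2 (Rop Ji1 (z / c2) w)) = z *\<^sub>C Ji2 (Rop Ji1 (z / c2) w)"
    if z: "z \<in> ball 0 r" and w: "w \<in> W" for z w
  proof -
    have "U (Ji2 (Rop Ji1 (z / c2) w)) = Ji2 (c2 *\<^sub>C T0 (Rop Ji1 (z / c2) w))" using U2 by blast
    also have "T0 (Rop Ji1 (z / c2) w) = (z / c2) *\<^sub>C Rop Ji1 (z / c2) w"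
      by (rule R_eigen[OF Ji1 Kb Kpos lsmall[OF z] T0l T0V T0W[OF w]])
    also have "c2 *\<^sub>C ((z / c2) *\<^sub>C Rop Ji1 (z / c2) w) = z *\<^sub>C Rop Ji1 (z / c2) w"
      using c2 by (simp add: scaleC_scaleC)
    finally show ?thesis by (simp add: clinear_scale[OF Ji2l])
  qed
  have flin: "clinear (Ji2 \<circ> Rop Ji1 (z / c2))" if z: "z \<in> ball 0 r" for z
    using R_clinear[OF Ji1 Kb Kpos lsmall[OF z]] Ji2l unfolding clinear_def by simp
  have finj: "inj (Ji2 \<circ> Rop Ji1 (z / c2))" if z: "z \<in> ball 0 r" for z
    using R_inj[OF Ji1 Kb Kpos lsmall[OF z]] Ji2(2) by (rule inj_compose[rotated])
  have Einf: "\<not> cfinite_dim {x. U x = z *\<^sub>C x}" if z: "z \<in> ball 0 r" for z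
  proof (rule not_cfinite_dim_image[OF flin[OF z] finj[OF z] Winf])
    show "(Ji2 \<circ> Rop Ji1 (z / c2)) ` W \<subseteq> {x. U x = z *\<^sub>C x}" using eig[OF z] by auto
  qed
  have ballsub: "ball 0 r \<subseteq> point_spectrum U \<inter> upper_essential_spectrum U"
  proof
    fix z :: complex assume z: "z \<in> ball 0 r"
    have "z \<in> point_spectrum U" unfolding point_spectrum_def
      using cfinite_dim_nonzero[OF Einf[OF z]] by blast
    moreover have "{x. shift_op U z x = 0} = {x. U x = z *\<^sub>C x}"
      unfolding shift_op_def by (simp add: right_minus_eq)
    then have "z \<in> upper_essential_spectrum U"
      unfolding upper_essential_spectrum_def upper_semi_fredholm_def using Einf[OF z] by simp
    ultimately show "z \<in> point_spectrum U \<inter> upper_essential_spectrum U" by blast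
  qed
  have incl1: "upper_essential_spectrum U \<subseteq> essential_spectrum U"
    unfolding upper_essential_spectrum_def essential_spectrum_def using fredholm_usf by blast
  have incl2: "essential_spectrum U \<subseteq> op_spectrum U"
    unfolding op_spectrum_def essential_spectrum_def using cinvertible_fredholm by blast
  have int: "0 \<in> interior S" if "ball 0 r \<subseteq> S" for S :: "complex set"
    unfolding mem_interior using rpos that by blast
  obtain w0 where w0: "w0 \<in> W" "w0 \<noteq> 0" using cfinite_dim_nonzero[OF Winf] by blast
  have holo: "vholomorphic_on (\<lambda>z. Ji2 (Rop Ji1 (z / c2) w0)) (ball 0 r)"
    by (rule holo_aux[OF Ji1 Kb Kpos Ji2(1) c2 lsmall])
  have nz: "Ji2 (Rop Ji1 (z / c2) w0) \<noteq> 0" if z: "z \<in> ball 0 r" for z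
  proof
    assume "Ji2 (Rop Ji1 (z / c2) w0) = 0"
    then have "(Ji2 \<circ> Rop Ji1 (z / c2)) w0 = (Ji2 \<circ> Rop Ji1 (z / c2)) 0"
      using clinear_zero[OF flin[OF z]] by simp
    then show False using finj[OF z] w0(2) by (meson injD)
  qed
  show ?thesis
  proof (intro conjI)
    show "\<exists>r>0. ball 0 r \<subseteq> point_spectrum U \<inter> upper_essential_spectrum U \<and>
            point_spectrum U \<inter> upper_essential_spectrum U \<subseteq> essential_spectrum U \<and>
            essential_spectrum U \<subseteq> op_spectrum U \<and>
            (\<forall>l\<in>ball 0 r. \<not> cfinite_dim {x. U x = l *\<^sub>C x})"
      using rpos ballsub incl1 incl2 Einf by blast
    show "0 \<in> interior (upper_essential_spectrum U)" using int ballsub by blast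
    show "0 \<in> interior (essential_spectrum U)" using int ballsub incl1 by blast
    show "0 \<in> interior (point_spectrum U)" using int ballsub by blast
    show "0 \<in> interior (op_spectrum U)" using int ballsub incl1 incl2 by blast
    show "\<exists>r>0. \<exists>y :: complex \<Rightarrow> 'a. vholomorphic_on y (ball 0 r) \<and>
            (\<forall>z\<in>ball 0 r. U (y z) = z *\<^sub>C y z \<and> y z \<noteq> 0)"
      using rpos holo eig[OF _ w0(1)] nz by blast
  qed
qed


end
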